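(* In the Truthful Interval Covering setting with $n$ agents and unit-length intervals, every randomized mechanism that is a convex combination of $k$-th ordered statistic mechanisms has approximation ratio at least $3/2$, i.e., $\sup_{\mathcal{I}} \mathbb{E}[\mathrm{SC}(\mathcal{M}(\mathcal{I}))]/\min_C\mathrm{SC}(C)\ge 3/2$.
   Context: There are $n$ agents; agent $i$ has an interval $I_i=[s_i,s_i+1]$ of length $1$; an instance is $\mathcal{I}=(I_1,\dots,I_n)$. A unit covering interval $C$ is placed; $\mathrm{cost}_i(C)=1-|I_i\cap C|$ ($|\cdot|$ = length), $\mathrm{SC}(C)=\sum_i\mathrm{cost}_i(C)$, minimum over all unit intervals $C$. The $k$-th ordered statistic mechanism places $C$ at $[s_{(k)},s_{(k)}+1]$, where $s_{(k)}$ is the $k$-th smallest left endpoint. A convex combination of such mechanisms chooses index $k$ with a fixed probability $p_k$ (with $\sum_k p_k=1$, independent of the instance) and then applies the $k$-th ordered statistic mechanism. *)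

theory Defs
  imports "HOL-Analysis.Analysis"
begin

text \<open>An instance is a list of left endpoints s_1..s_n; agent i has interval [s_i, s_i+1].
  A unit covering interval C = [c, c+1] is identified with its left endpoint c.\<close>

definition overlap :: "real \<Rightarrow> real \<Rightarrow> real" where
  "overlap s c = max 0 (min (s + 1) (c + 1) - max s c)"

definition agent_cost :: "real \<Rightarrow> real \<Rightarrow> real" where
  "agent_cost s c = 1 - overlap s c"

definition SC :: "real list \<Rightarrow> real \<Rightarrow> real" where
  "SC ss c = (\<Sum>s\<leftarrow>ss. agent_cost s c)"

definition OPT :: "real list \<Rightarrow> real" where
  "OPT ss = (INF c. SC ss c)"

definition order_stat :: "real list \<Rightarrow> nat \<Rightarrow> real" where
  "order_stat ss k = sort ss ! (k - 1)"

text \<open>A convex combination of ordered statistic mechanisms: for each number of agents n,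
  probabilities p n k (k = 1..n) fixed independently of the instance.\<close>
definition is_os_mixture :: "(nat \<Rightarrow> nat \<Rightarrow> real) \<Rightarrow> bool" where
  "is_os_mixture p \<longleftrightarrow> (\<forall>n\<ge>1. (\<forall>k\<in>{1..n}. 0 \<le> p n k) \<and> (\<Sum>k=1..n. p n k) = 1)"

definition expected_SC :: "(nat \<Rightarrow> nat \<Rightarrow> real) \<Rightarrow> real list \<Rightarrow> real" where
  "expected_SC p ss = (\<Sum>k=1..length ss. p (length ss) k * SC ss (order_stat ss k))"

end

theory Submission
  imports Defs
begin

lemma agent_cost_eq: "agent_cost s c = min 1 \<bar>s - c\<bar>"
  unfolding agent_cost_def overlap_def by (auto simp: min_def max_def abs_if)

lemma agent_cost_nonneg: "0 \<le> agent_cost s c"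
  by (simp add: agent_cost_eq)

lemma agent_cost_pair:
  assumes "1 \<le> \<bar>s - t\<bar>"
  shows "1 \<le> agent_cost s c + agent_cost t c"
  using assms by (auto simp: agent_cost_eq min_def abs_if split: if_splits)

lemma agent_cost_nat: "agent_cost (real x) (real d) = (if x = d then 0 else 1)"
proof (cases "x = d")
  case False
  then have "1 \<le> \<bar>real x - real d\<bar>" by (cases "x < d") auto
  then show ?thesis using False by (simp add: agent_cost_eq)
qed (simp add: agent_cost_eq)

lemma SC_map: "SC (map f [0..<N]) c = (\<Sum>i\<in>{0..<N}. agent_cost (f i) c)"
  unfolding SC_def by (simp add: sum_set_upt_conv_sum_list_nat[symmetric] o_def)

lemma SC_nat:
  "SC (map (\<lambda>i. real (g i)) [0..<N]) (real d) = real (card {i\<in>{0..<N}. g i \<noteq> d})"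
proof -
  have "SC (map (\<lambda>i. real (g i)) [0..<N]) (real d) = (\<Sum>i\<in>{0..<N}. if g i \<noteq> d then 1 else 0)"
    unfolding SC_map by (rule sum.cong) (auto simp: agent_cost_nat)
  also have "\<dots> = (\<Sum>i\<in>{i\<in>{0..<N}. g i \<noteq> d}. 1)"
    by (subst sum.inter_filter) auto
  finally show ?thesis by simp
qed

lemma SC_nonneg: "0 \<le> SC ss c"
  unfolding SC_def by (induction ss) (auto simp: agent_cost_nonneg)

lemma OPT_le: "OPT ss \<le> SC ss c"
  unfolding OPT_def by (rule cINF_lower) (auto intro: bdd_belowI2[where m=0] SC_nonneg)

lemma OPT_ge1:
  assumes "i < N" "j < N" "1 \<le> \<bar>f i - f j\<bar>"
  shows "1 \<le> OPT (map f [0..<N])"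
  unfolding OPT_def
proof (rule cINF_greatest)
  fix c
  have ij: "i \<noteq> j" using assms(3) by auto
  have "1 \<le> agent_cost (f i) c + agent_cost (f j) c" using agent_cost_pair assms(3) by blast
  also have "\<dots> = (\<Sum>k\<in>{i,j}. agent_cost (f k) c)" using ij by simp
  also have "\<dots> \<le> (\<Sum>k\<in>{0..<N}. agent_cost (f k) c)"
    by (rule sum_mono2) (use assms in \<open>auto simp: agent_cost_nonneg\<close>)
  finally show "1 \<le> SC (map f [0..<N]) c" by (simp add: SC_map)
qed simp

definition gA :: "nat \<Rightarrow> nat \<Rightarrow> nat" where
  "gA m i = (if i < m then 0 else i - m + 1)"
definition gB :: "nat \<Rightarrow> nat \<Rightarrow> nat" where
  "gB m i = (if i < m then i else m)"

definition LA :: "nat \<Rightarrow> real list" where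
  "LA m = map (\<lambda>i. real (gA m i)) [0..<2*m]"
definition LB :: "nat \<Rightarrow> real list" where
  "LB m = map (\<lambda>i. real (gB m i)) [0..<2*m]"

lemma sorted_LA: "sorted (LA m)"
  unfolding LA_def gA_def by (auto simp: sorted_wrt_map intro!: sorted_wrt_mono_rel[OF _ sorted_wrt_upt])

lemma sorted_LB: "sorted (LB m)"
  unfolding LB_def gB_def by (auto simp: sorted_wrt_map intro!: sorted_wrt_mono_rel[OF _ sorted_wrt_upt])

lemma os_LA: "k \<in> {1..2*m} \<Longrightarrow> order_stat (LA m) k = real (gA m (k - 1))"
  proof -
  assume "k \<in> {1..2*m}"
  then have "k - 1 < 2*m" by auto
  then show ?thesis unfolding order_stat_def using sorted_LA[of m] by (simp add: sorted_sort_id LA_def)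
qed

lemma os_LB: "k \<in> {1..2*m} \<Longrightarrow> order_stat (LB m) k = real (gB m (k - 1))"
  proof -
  assume "k \<in> {1..2*m}"
  then have "k - 1 < 2*m" by auto
  then show ?thesis unfolding order_stat_def using sorted_LB[of m] by (simp add: sorted_sort_id LB_def)
qed

lemma sum_costs:
  assumes "i < 2*m"
  shows "SC (LA m) (real (gA m i)) + SC (LB m) (real (gB m i)) = 3 * real m - 1"
proof (cases "i < m")
  case True
  have "{i'\<in>{0..<2*m}. gA m i' \<noteq> gA m i} = {m..<2*m}"
    using True by (auto simp: gA_def)
  moreover have "{i'\<in>{0..<2*m}. gB m i' \<noteq> gB m i} = {0..<2*m} - {i}"
    using True by (auto simp: gB_def)
  ultimately show ?thesis using True assms unfolding LA_def LB_def SC_nat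
    by (simp add: card_Diff_singleton of_nat_diff)
next
  case False
  have "{i'\<in>{0..<2*m}. gA m i' \<noteq> gA m i} = {0..<2*m} - {i}"
    using False by (auto simp: gA_def)
  moreover have "{i'\<in>{0..<2*m}. gB m i' \<noteq> gB m i} = {0..<m}"
    using False by (auto simp: gB_def)
  ultimately show ?thesis using False assms unfolding LA_def LB_def SC_nat
    by (simp add: card_Diff_singleton of_nat_diff)
qed

lemma SC_LA0: "SC (LA m) (real 0) = real m"
proof -
  have "{i'\<in>{0..<2*m}. gA m i' \<noteq> 0} = {m..<2*m}" by (auto simp: gA_def)
  then show ?thesis unfolding LA_def SC_nat by simp
qed

lemma SC_LBm: "SC (LB m) (real m) = real m"
proof -
  have "{i'\<in>{0..<2*m}. gB m i' \<noteq> m} = {0..<m}" by (auto simp: gB_def)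
  then show ?thesis unfolding LB_def SC_nat by simp
qed

lemma expected_nonneg:
  assumes "is_os_mixture p" "ss \<noteq> []"
  shows "0 \<le> expected_SC p ss"
proof -
  have "length ss \<ge> 1" using assms(2) by (cases ss) auto
  then have "\<forall>k\<in>{1..length ss}. 0 \<le> p (length ss) k" using assms(1) unfolding is_os_mixture_def by blast
  then show ?thesis unfolding expected_SC_def by (intro sum_nonneg) (auto intro: mult_nonneg_nonneg SC_nonneg)
qed

lemma key:
  assumes mix: "is_os_mixture p" and m: "1 \<le> m"
  shows "ereal (3/2 - 1/(2*real m)) \<le> (SUP ss \<in> {ss. ss \<noteq> [] \<and> OPT ss > 0}. ereal (expected_SC p ss / OPT ss))"
proof -
  define A where "A = LA m"
  define B where "B = LB m"
  have lenA: "length A = 2*m" and lenB: "length B = 2*m" by (simp_all add: A_def B_def LA_def LB_def)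
  have neA: "A \<noteq> []" and neB: "B \<noteq> []" using lenA lenB m by auto
  have OA1: "1 \<le> OPT A" unfolding A_def LA_def
    by (rule OPT_ge1[where i=0 and j=m]) (use m in \<open>auto simp: gA_def\<close>)
  have OB1: "1 \<le> OPT B" unfolding B_def LB_def
    by (rule OPT_ge1[where i=0 and j=m]) (use m in \<open>auto simp: gB_def\<close>)
  have OAm: "OPT A \<le> real m" using OPT_le[of A "real 0"] SC_LA0[of m] by (simp add: A_def)
  have OBm: "OPT B \<le> real m" using OPT_le[of B "real m"] SC_LBm[of m] by (simp add: B_def)
  have psum: "(\<Sum>k=1..2*m. p (2*m) k) = 1" using mix m unfolding is_os_mixture_def by simp
  have "expected_SC p A + expected_SC p B
      = (\<Sum>k=1..2*m. p (2*m) k * (SC A (order_stat A k) + SC B (order_stat B k)))"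
    unfolding expected_SC_def lenA lenB by (simp add: sum.distrib algebra_simps)
  also have "\<dots> = (\<Sum>k=1..2*m. p (2*m) k * (3 * real m - 1))"
  proof (rule sum.cong)
    fix k assume k: "k \<in> {1..2*m}"
    then have "k - 1 < 2*m" by auto
    then show "p (2*m) k * (SC A (order_stat A k) + SC B (order_stat B k)) = p (2*m) k * (3 * real m - 1)"
      using sum_costs[of "k-1" m] os_LA[OF k] os_LB[OF k] by (simp add: A_def B_def)
  qed simp
  also have "\<dots> = 3 * real m - 1" using psum by (simp add: sum_distrib_right[symmetric])
  finally have Esum: "expected_SC p A + expected_SC p B = 3 * real m - 1" .
  have EA0: "0 \<le> expected_SC p A" using expected_nonneg[OF mix neA] .
  have EB0: "0 \<le> expected_SC p B" using expected_nonneg[OF mix neB] .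
  have rA: "expected_SC p A / real m \<le> expected_SC p A / OPT A"
    using OA1 OAm EA0 by (intro divide_left_mono) auto
  have rB: "expected_SC p B / real m \<le> expected_SC p B / OPT B"
    using OB1 OBm EB0 by (intro divide_left_mono) auto
  have mpos: "0 < real m" using m by simp
  have "(expected_SC p A + expected_SC p B) / real m = 3 - 1 / real m"
    using Esum mpos by (simp add: field_simps)
  then have sumr: "3 - 1 / real m \<le> expected_SC p A / OPT A + expected_SC p B / OPT B"
    using rA rB by (simp add: add_divide_distrib)
  have inA: "A \<in> {ss. ss \<noteq> [] \<and> OPT ss > 0}" using neA OA1 by simp
  have inB: "B \<in> {ss. ss \<noteq> [] \<and> OPT ss > 0}" using neB OB1 by simp
  have eq: "3/2 - 1/(2*real m) = (3 - 1 / real m) / 2" by (simp add: field_simps)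
  show ?thesis
  proof (cases "expected_SC p A / OPT A \<le> expected_SC p B / OPT B")
    case True
    then have "3/2 - 1/(2*real m) \<le> expected_SC p B / OPT B" using sumr eq by linarith
    then have "ereal (3/2 - 1/(2*real m)) \<le> ereal (expected_SC p B / OPT B)" by simp
    also have "\<dots> \<le> (SUP ss \<in> {ss. ss \<noteq> [] \<and> OPT ss > 0}. ereal (expected_SC p ss / OPT ss))"
      by (rule SUP_upper[OF inB])
    finally show ?thesis .
  next
    case False
    then have "3/2 - 1/(2*real m) \<le> expected_SC p A / OPT A" using sumr eq by linarith
    then have "ereal (3/2 - 1/(2*real m)) \<le> ereal (expected_SC p A / OPT A)" by simp
    also have "\<dots> \<le> (SUP ss \<in> {ss. ss \<noteq> [] \<and> OPT ss > 0}. ereal (expected_SC p ss / OPT ss))"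
      by (rule SUP_upper[OF inA])
    finally show ?thesis .
  qed
qed

theorem theorem6:
  fixes p :: "nat \<Rightarrow> nat \<Rightarrow> real"
  assumes "is_os_mixture p"
  shows "ereal (3/2) \<le> (SUP ss \<in> {ss. ss \<noteq> [] \<and> OPT ss > 0}. ereal (expected_SC p ss / OPT ss))"
proof (rule ereal_le_epsilon2)
  fix e :: real assume e: "0 < e"
  obtain m :: nat where m: "1 / e < real m" using reals_Archimedean2 by blast
  have m1: "1 \<le> m" using m e by (cases m) (auto simp: field_simps)
  have "1 / real m < e" using m e m1 by (simp add: field_simps)
  then have "1 / (2 * real m) \<le> e" using m1 by (simp add: field_simps)
  then have "ereal (3/2) \<le> ereal (3/2 - 1/(2*real m)) + ereal e" by simp
  also have "\<dots> \<le> (SUP ss \<in> {ss. ss \<noteq> [] \<and> OPT ss > 0}. ereal (expected_SC p ss / OPT ss)) + ereal e"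
    by (intro add_right_mono key[OF assms m1])
  finally show "ereal (3/2) \<le> (SUP ss \<in> {ss. ss \<noteq> [] \<and> OPT ss > 0}. ereal (expected_SC p ss / OPT ss)) + ereal e" .
qed

end
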